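(* Let $(S,* )$ be a finite cycle set of size $n$ and class $d$, with structure group $G$, germ $\overline G$, permutation group $\mathcal G$ and diagonal map $T$. Then: (i) the map $\psi\colon G\to\mathcal G$ factorizes through the projection $\pi\colon G\to\overline G$, i.e. there is a map $\phi\colon\overline G\to\mathcal G$ with $\psi=\phi\circ\pi$; (ii) $o(T)$ divides $d$, $d$ divides $|\mathcal G|$, and $|\mathcal G|$ divides $d^n$, where $o(T)$ is the order of the permutation $T$ of $S$.
   Context: A cycle set is a set $S$ with a binary operation $*$ such that each $t\mapsto s*t$ is bijective and $(s*t)*(s*u)=(t*s)*(t*u)$ for all $s,t,u$. Write $S=\{s_1,\dots,s_n\}$, let $\psi(s)\in\mathfrak S_n$ satisfy $s_i*s_j=s_{\psi(s_i)(j)}$, and $T(s)=s*s$ (a bijection of $S$ for finite cycle sets). The structure group $G$ has presentation $\langle S\mid s(s*t)=t(t*s),\ s\ne t\rangle$; $\psi$ extends to the anti-homomorphism $\psi\colon G\to\mathfrak S_n$ with $\psi(gh)=\psi(h)\circ\psi(g)$, whose image is the permutation group $\mathcal G=\langle\psi(s_1),\dots,\psi(s_n)\rangle$. With $\psi_k(s)=\psi(T^{k-1}(s))\circ\cdots\circ\psi(s)$, the class $d$ is the least $d\ge1$ with $\psi_d(s)=\mathrm{id}$ for all $s$. With $P_\sigma$ the matrix having $1$ at $(i,\sigma(i))$ and $\zeta_d=e^{2i\pi/d}$, the germ $\overline G$ is the subgroup of $GL_n(\mathbb C)$ generated by $\bar s_i=\mathrm{diag}(1,\dots,\zeta_d,\dots,1)P_{\psi(s_i)}$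 ($\zeta_d$ in position $i$), and $\pi\colon G\to\overline G$ is the surjective homomorphism $s_i\mapsto\bar s_i$. *)

theory Defs
  imports "HOL-Analysis.Analysis"
begin

text \<open>A finite cycle set: the underlying set is a finite type 'n, with operation op s t = s*t.
  We identify s_i with the element i of 'n, so psi(s) is just op s.\<close>

definition cycle_set :: "('n \<Rightarrow> 'n \<Rightarrow> 'n) \<Rightarrow> bool" where
  "cycle_set op \<longleftrightarrow> (\<forall>s. bij (op s)) \<and>
     (\<forall>s t u. op (op s t) (op s u) = op (op t s) (op t u))"

definition diagT :: "('n \<Rightarrow> 'n \<Rightarrow> 'n) \<Rightarrow> 'n \<Rightarrow> 'n" where
  "diagT op s = op s s"

fun psi_k :: "('n \<Rightarrow> 'n \<Rightarrow> 'n) \<Rightarrow> nat \<Rightarrow> 'n \<Rightarrow> ('n \<Rightarrow> 'n)" where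
  "psi_k op 0 s = id"
| "psi_k op (Suc k) s = op ((diagT op ^^ k) s) \<circ> psi_k op k s"

definition is_class :: "('n \<Rightarrow> 'n \<Rightarrow> 'n) \<Rightarrow> nat \<Rightarrow> bool" where
  "is_class op d \<longleftrightarrow> d \<ge> 1 \<and> (\<forall>s. psi_k op d s = id) \<and>
     (\<forall>d'. d' \<ge> 1 \<and> (\<forall>s. psi_k op d' s = id) \<longrightarrow> d \<le> d')"

text \<open>Elements of the structure group G are represented by words in the generators
  and their inverses: a letter (s, True) is s, a letter (s, False) is s^{-1}.\<close>
type_synonym 'n word = "('n \<times> bool) list"

text \<open>The anti-homomorphism psi : G -> Sym(S), psi(gh) = psi(h) o psi(g).\<close>
fun psi_w :: "('n \<Rightarrow> 'n \<Rightarrow> 'n) \<Rightarrow> 'n word \<Rightarrow> ('n \<Rightarrow> 'n)" where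
  "psi_w op [] = id"
| "psi_w op ((s, b) # w) = psi_w op w \<circ> (if b then op s else inv (op s))"

definition perm_group :: "('n \<Rightarrow> 'n \<Rightarrow> 'n) \<Rightarrow> ('n \<Rightarrow> 'n) set" where
  "perm_group op = range (psi_w op)"

definition perm_mat :: "('n::finite \<Rightarrow> 'n) \<Rightarrow> complex^'n^'n" where
  "perm_mat \<sigma> = (\<chi> i j. if j = \<sigma> i then 1 else 0)"

definition zeta :: "nat \<Rightarrow> complex" where
  "zeta d = cis (2 * pi / real d)"

definition germ_gen :: "('n::finite \<Rightarrow> 'n \<Rightarrow> 'n) \<Rightarrow> nat \<Rightarrow> 'n \<Rightarrow> complex^'n^'n" where
  "germ_gen op d i = (\<chi> a b. if a = b then (if a = i then zeta d else 1) else 0) ** perm_mat (op i)"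

fun pi_w :: "('n::finite \<Rightarrow> 'n \<Rightarrow> 'n) \<Rightarrow> nat \<Rightarrow> 'n word \<Rightarrow> complex^'n^'n" where
  "pi_w op d [] = mat 1"
| "pi_w op d ((s, b) # w) =
     (if b then germ_gen op d s else matrix_inv (germ_gen op d s)) ** pi_w op d w"

definition germ :: "('n::finite \<Rightarrow> 'n \<Rightarrow> 'n) \<Rightarrow> nat \<Rightarrow> (complex^'n^'n) set" where
  "germ op d = range (pi_w op d)"

definition perm_order :: "('n \<Rightarrow> 'n) \<Rightarrow> nat" where
  "perm_order f = (LEAST k. k > 0 \<and> f ^^ k = id)"

end

theory Submission
  imports Defs
begin

definition monop :: "('n::finite \<Rightarrow> 'n) \<Rightarrow> complex^'n^'n \<Rightarrow> bool" where
  "monop \<pi> M \<longleftrightarrow> (\<forall>i j. M$i$j \<noteq> 0 \<longleftrightarrow> j = \<pi> i)"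

lemma monop_mult:
  assumes "monop \<rho> A" "monop \<pi> M"
  shows "monop (\<pi> \<circ> \<rho>) (A ** M)"
  unfolding monop_def
proof (intro allI)
  fix i k
  have "(A ** M)$i$k = (\<Sum>j\<in>UNIV. A$i$j * M$j$k)" by (simp add: matrix_matrix_mult_def)
  also have "\<dots> = A$i$(\<rho> i) * M$(\<rho> i)$k"
  proof -
    have "(\<Sum>j\<in>UNIV. A$i$j * M$j$k) = A$i$(\<rho> i) * M$(\<rho> i)$k + (\<Sum>j\<in>UNIV-{\<rho> i}. A$i$j * M$j$k)"
      by (rule sum.remove) auto
    also have "(\<Sum>j\<in>UNIV-{\<rho> i}. A$i$j * M$j$k) = 0"
      using assms(1) by (auto simp: monop_def intro!: sum.neutral)
    finally show ?thesis by simp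
  qed
  finally show "(A ** M)$i$k \<noteq> 0 \<longleftrightarrow> k = (\<pi> \<circ> \<rho>) i"
    using assms by (auto simp: monop_def)
qed

lemma zeta_nz: "zeta d \<noteq> 0" by (simp add: zeta_def)

definition dg :: "nat \<Rightarrow> 'n \<Rightarrow> 'n \<Rightarrow> complex" where
  "dg d s a = (if a = s then zeta d else 1)"

lemma dg_nz: "dg d s a \<noteq> 0" by (simp add: dg_def zeta_nz)

lemma germ_gen_entry: "germ_gen op d s $ i $ j = (if j = op s i then dg d s i else 0)"
proof -
  have "germ_gen op d s $ i $ j = (\<Sum>k\<in>UNIV. (if i = k then (if i = s then zeta d else 1) else 0) * (if j = op s k then 1 else 0))"
    by (simp add: germ_gen_def matrix_matrix_mult_def perm_mat_def)
  also have "\<dots> = (\<Sum>k\<in>UNIV. if k = i then (if j = op s i then dg d s i else 0) else 0)"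
    by (rule sum.cong) (auto simp: dg_def)
  also have "\<dots> = (if j = op s i then dg d s i else 0)" by simp
  finally show ?thesis .
qed

lemma monop_gen: "monop (op s) (germ_gen op d s)"
  by (auto simp: monop_def germ_gen_entry dg_nz)

lemma monop_inv:
  fixes op :: "'n::finite \<Rightarrow> 'n \<Rightarrow> 'n"
  assumes "bij (op s)"
  shows "monop (inv (op s)) (matrix_inv (germ_gen op d s))"
proof -
  let ?A = "germ_gen op d s"
  define B :: "complex^'n^'n" where "B = (\<chi> i j. if op s j = i then 1 / dg d s j else 0)"
  have inj: "inj (op s)" and sur: "surj (op s)" using assms bij_is_inj bij_is_surj by auto
  have AB: "?A ** B = mat 1"
  proof -
    have "(?A ** B)$i$k = (if k = i then 1 else 0)" for i k
    proof -
      have "(?A ** B)$i$k = (\<Sum>j\<in>UNIV. (if j = op s i then dg d s i else 0) * (if op s k = j then 1 / dg d s k else 0))"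
        by (simp add: matrix_matrix_mult_def germ_gen_entry B_def)
      also have "\<dots> = (\<Sum>j\<in>UNIV. if j = op s i then (if op s k = op s i then dg d s i / dg d s k else 0) else 0)"
        by (rule sum.cong) auto
      also have "\<dots> = (if op s k = op s i then dg d s i / dg d s k else 0)" by simp
      also have "\<dots> = (if k = i then 1 else 0)" using inj dg_nz[of d s i] by (auto dest: injD)
      finally show ?thesis .
    qed
    then show ?thesis by (simp add: vec_eq_iff mat_def)
  qed
  have BA: "B ** ?A = mat 1"
  proof -
    have "(B ** ?A)$i$k = (if k = i then 1 else 0)" for i k
    proof -
      obtain j0 where j0: "op s j0 = i" using sur by (metis surjD)
      have "(B ** ?A)$i$k = (\<Sum>j\<in>UNIV. (if op s j = i then 1 / dg d s j else 0) * (if k = op s j then dg d s j else 0))"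
        by (simp add: matrix_matrix_mult_def germ_gen_entry B_def)
      also have "\<dots> = (\<Sum>j\<in>UNIV. if j = j0 then (if k = i then 1 else 0) else 0)"
        by (rule sum.cong) (use j0 inj dg_nz[of d s] in \<open>auto dest: injD\<close>)
      also have "\<dots> = (if k = i then 1 else 0)" by simp
      finally show ?thesis .
    qed
    then show ?thesis by (simp add: vec_eq_iff mat_def)
  qed
  have MI: "?A ** matrix_inv ?A = mat 1 \<and> matrix_inv ?A ** ?A = mat 1"
    unfolding matrix_inv_def by (rule someI[of _ B]) (use AB BA in auto)
  have "matrix_inv ?A = matrix_inv ?A ** (?A ** B)" using AB by simp
  also have "\<dots> = B" using MI by (simp add: matrix_mul_assoc)
  finally have eq: "matrix_inv ?A = B" .
  show ?thesis unfolding eq monop_def B_def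
    using dg_nz[of d s] assms by (auto simp: bij_inv_eq_iff)
qed

lemma monop_pi:
  fixes op :: "'n::finite \<Rightarrow> 'n \<Rightarrow> 'n"
  assumes "\<And>s. bij (op s)"
  shows "monop (psi_w op w) (pi_w op d w)"
proof (induction w)
  case Nil
  then show ?case by (auto simp: monop_def mat_def)
next
  case (Cons a w)
  obtain s b where a: "a = (s, b)" by force
  show ?case
  proof (cases b)
    case True
    then show ?thesis using monop_mult[OF monop_gen[of op s d] Cons] a by (simp add: comp_def)
  next
    case False
    then show ?thesis using monop_mult[OF monop_inv[of op s d, OF assms] Cons] a by (simp add: comp_def)
  qed
qed

lemma part1:
  fixes op :: "'n::finite \<Rightarrow> 'n \<Rightarrow> 'n"
  assumes "\<And>s. bij (op s)"
  shows "\<exists>\<phi> :: complex^'n^'n \<Rightarrow> ('n \<Rightarrow> 'n).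
            \<phi> ` germ op d \<subseteq> perm_group op \<and> (\<forall>w. psi_w op w = \<phi> (pi_w op d w))"
proof -
  define \<phi> :: "complex^'n^'n \<Rightarrow> ('n \<Rightarrow> 'n)" where "\<phi> M = (\<lambda>i. SOME j. M$i$j \<noteq> 0)" for M
  have e: "psi_w op w = \<phi> (pi_w op d w)" for w
    using monop_pi[OF assms, where w=w and d=d] by (auto simp: \<phi>_def monop_def)
  show ?thesis
    by (rule exI[of _ \<phi>]) (auto simp: germ_def perm_group_def e)
qed

lemma psi_k_bij: "(\<And>s. bij (op s)) \<Longrightarrow> bij (psi_k op j s)"
  by (induction j) (auto intro: bij_comp)

lemma psi_k_self: "psi_k op j s s = (diagT op ^^ j) s"
proof (induction j)
  case (Suc j)
  then show ?case by (simp add: diagT_def[of op "(diagT op ^^ j) s"])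
qed simp

lemma psi_k_add: "psi_k op (i + j) s = psi_k op j ((diagT op ^^ i) s) \<circ> psi_k op i s"
proof (induction j)
  case (Suc j)
  have "(diagT op ^^ (i + j)) s = (diagT op ^^ j) ((diagT op ^^ i) s)"
    by (metis funpow_add add.commute comp_apply)
  then show ?case using Suc by simp
qed simp

lemma psi_k_add_id: "psi_k op i s = id \<Longrightarrow> psi_k op (i + j) s = psi_k op j s"
  using psi_k_add[of op i j s] psi_k_self[of op i s] by simp

lemma psi_k_mult_id: "psi_k op k s = id \<Longrightarrow> psi_k op (k * q) s = id"
proof (induction q)
  case 0 then show ?case by simp
next
  case (Suc q)
  have "psi_k op (k * Suc q) s = psi_k op (k + k * q) s" by simp
  also have "\<dots> = psi_k op (k*q) s" using psi_k_add_id[OF Suc.prems] .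
  finally show ?case using Suc by simp
qed

lemma psi_k_dvd_id: "psi_k op k s = id \<Longrightarrow> k dvd j \<Longrightarrow> psi_k op j s = id"
  using psi_k_mult_id by (metis dvd_def)

lemma psi_k_least_dvd:
  assumes "psi_k op j s = id" "k = (LEAST k. 0 < k \<and> psi_k op k s = id)" "0 < k" "psi_k op k s = id"
  shows "k dvd j"
proof (rule ccontr)
  assume nd: "\<not> k dvd j"
  have "psi_k op j s = psi_k op (k * (j div k) + j mod k) s" by simp
  also have "\<dots> = psi_k op (j mod k) s" by (rule psi_k_add_id[OF psi_k_mult_id[OF assms(4)]])
  finally have e: "psi_k op (j mod k) s = id" using assms(1) by simp
  have "j mod k > 0" using nd by (simp add: dvd_eq_mod_eq_0)
  then have "k \<le> j mod k" using e assms(2) by (simp add: Least_le)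
  moreover have "j mod k < k" using assms(3) by simp
  ultimately show False by simp
qed

lemma orbit_dvd:
  fixes f :: "'a \<Rightarrow> 'a"
  assumes "finite A" "\<forall>x\<in>A. f x \<in> A" "\<forall>x\<in>A. (f^^k) x = x"
    "\<forall>x\<in>A. \<forall>j. 0 < j \<and> j < k \<longrightarrow> (f^^j) x \<noteq> x" "0 < k"
  shows "k dvd card A"
  using assms
proof (induction "card A" arbitrary: A rule: less_induct)
  case less
  have fin: "finite A" using less.prems(1) .
  have fA: "\<And>y. y\<in>A \<Longrightarrow> f y \<in> A" using less.prems(2) by blast
  have pk: "\<And>y. y\<in>A \<Longrightarrow> (f^^k) y = y" using less.prems(3) by blast
  have np: "\<And>y j. y\<in>A \<Longrightarrow> 0<j \<Longrightarrow> j<k \<Longrightarrow> (f^^j) y \<noteq> y" using less.prems(4) by blast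
  have k0: "0 < k" by fact
  show ?case
  proof (cases "A = {}")
    case True then show ?thesis by simp
  next
    case False
    then obtain x where x: "x \<in> A" by auto
    have inA: "(f^^j) x \<in> A" for j
    proof (induction j)
      case 0 then show ?case using x by simp
    next
      case (Suc j) then show ?case using fA by simp
    qed
    have kq: "(f^^(k*q)) x = x" for q
    proof (induction q)
      case 0 then show ?case by simp
    next
      case (Suc q)
      have "(f^^(k*Suc q)) x = (f^^k) ((f^^(k*q)) x)" by (simp add: funpow_add)
      then show ?case using Suc pk x by simp
    qed
    have per: "(f^^j) x = (f^^(j mod k)) x" for j
    proof -
      have "(f^^j) x = (f^^(j mod k + k * (j div k))) x" by simp
      also have "\<dots> = (f^^(j mod k)) ((f^^(k * (j div k))) x)" by (simp only: funpow_add comp_apply)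
      finally show ?thesis using kq by simp
    qed
    have sh: "(f^^(b - a)) ((f^^a) x) = (f^^b) x" if "a \<le> b" for a b
    proof -
      have "(f^^(b - a)) ((f^^a) x) = (f^^(b - a + a)) x" by (simp only: funpow_add comp_apply)
      then show ?thesis using that by simp
    qed
    define Orb where "Orb = (\<lambda>j. (f^^j) x) ` {..<k}"
    have OA: "Orb \<subseteq> A" using inA Orb_def by auto
    have inj: "inj_on (\<lambda>j. (f^^j) x) {..<k}"
    proof (rule inj_onI)
      fix i j assume ij: "i \<in> {..<k}" "j \<in> {..<k}" "(f^^i) x = (f^^j) x"
      show "i = j"
      proof (rule ccontr)
        assume "i \<noteq> j"
        then consider "i < j" | "j < i" by linarith
        then show False
        proof cases
          case 1
          have "(f^^(j-i)) ((f^^i) x) = (f^^i) x" using sh[of i j] 1 ij(3) by simp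
          moreover have "0 < j - i" "j - i < k" using 1 ij by auto
          ultimately show False using np[OF inA[of i]] by blast
        next
          case 2
          have "(f^^(i-j)) ((f^^j) x) = (f^^j) x" using sh[of j i] 2 ij(3) by simp
          moreover have "0 < i - j" "i - j < k" using 2 ij by auto
          ultimately show False using np[OF inA[of j]] by blast
        qed
      qed
    qed
    have cO: "card Orb = k" using inj Orb_def by (simp add: card_image)
    have cl: "\<forall>y\<in>A - Orb. f y \<in> A - Orb"
    proof
      fix y assume y: "y \<in> A - Orb"
      show "f y \<in> A - Orb"
      proof (rule ccontr)
        assume "f y \<notin> A - Orb"
        then obtain j where j: "f y = (f^^j) x" using fA y Orb_def by auto
        have "y = (f^^k) y" using pk y by auto
        also have "\<dots> = (f^^(k - 1 + 1)) y" using k0 by simp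
        also have "\<dots> = (f^^(k-1)) (f y)" by (simp only: funpow_add comp_apply) simp
        also have "\<dots> = (f^^(k - 1 + j)) x" using j by (simp only: funpow_add comp_apply)
        also have "\<dots> = (f^^((k - 1 + j) mod k)) x" by (rule per)
        finally have "y \<in> Orb" using Orb_def k0 by auto
        then show False using y by auto
      qed
    qed
    have finO: "finite Orb" using OA fin finite_subset by blast
    have cD: "card (A - Orb) = card A - k" using cO OA fin by (simp add: card_Diff_subset finO)
    have kA: "k \<le> card A" using cO OA fin card_mono by metis
    have "card (A - Orb) < card A" using cD kA k0 by simp
    then have "k dvd card (A - Orb)"
      using less.hyps[of "A - Orb"] fin cl pk np k0 by auto
    moreover have "card A = card (A - Orb) + k" using cD kA by simp
    ultimately show ?thesis by simp
  qed
qed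

definition ev :: "'n \<Rightarrow> 'n \<Rightarrow> nat" where "ev t = (\<lambda>i. if i = t then 1 else 0)"

fun vecw :: "('n \<Rightarrow> 'n \<Rightarrow> 'n) \<Rightarrow> 'n list \<Rightarrow> ('n \<Rightarrow> nat)" where
  "vecw op [] = (\<lambda>_. 0)"
| "vecw op (t # w) = (\<lambda>i. ev t i + vecw op w (op t i))"

fun Pw :: "('n \<Rightarrow> 'n \<Rightarrow> 'n) \<Rightarrow> 'n list \<Rightarrow> ('n \<Rightarrow> 'n)" where
  "Pw op [] = id"
| "Pw op (t # w) = Pw op w \<circ> op t"

locale cs =
  fixes op :: "'n::finite \<Rightarrow> 'n \<Rightarrow> 'n"
  assumes bij: "\<And>s. bij (op s)"
    and ax: "\<And>s t u. op (op s t) (op s u) = op (op t s) (op t u)"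
begin

lemma psi_bij: "bij (psi_k op j s)" by (rule psi_k_bij) (rule bij)

lemma inj_op: "op s x = op s y \<longleftrightarrow> x = y"
  using bij[of s] by (auto dest: bij_is_inj injD)

lemma sum_vec: "(\<Sum>i\<in>UNIV. vecw op w i) = length w"
proof (induction w)
  case (Cons t w)
  have "(\<Sum>i\<in>UNIV. vecw op w (op t i)) = (\<Sum>i\<in>UNIV. vecw op w i)"
    by (rule sum.reindex_bij_betw) (use bij[of t] in \<open>simp add: bij_betw_def bij_def\<close>)
  then show ?case using Cons by (simp add: sum.distrib ev_def)
qed simp

lemma ex_word: "\<exists>w. vecw op w = b"
proof (induction "\<Sum>i\<in>UNIV. b i" arbitrary: b)
  case 0
  then have "b = (\<lambda>_. 0)" by (simp add: fun_eq_iff)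
  then show ?case by (metis vecw.simps(1))
next
  case (Suc n)
  have "\<exists>r. b r \<ge> 1"
  proof (rule ccontr)
    assume "\<not> (\<exists>r. b r \<ge> 1)"
    then have "\<forall>r. b r = 0" by (metis One_nat_def Suc_leI not_gr0)
    then have "(\<Sum>i\<in>UNIV. b i) = 0" by simp
    then show False using Suc.hyps(2) by simp
  qed
  then obtain r where r: "b r \<ge> 1" by blast
  define b' where "b' = (\<lambda>x. b (inv (op r) x) - ev r (inv (op r) x))"
  have "(\<Sum>i\<in>UNIV. b' i) = (\<Sum>i\<in>UNIV. b' (op r i))"
    by (rule sum.reindex_bij_betw[symmetric]) (use bij[of r] in \<open>simp add: bij_betw_def bij_def\<close>)
  also have "\<dots> = (\<Sum>i\<in>UNIV. b i - ev r i)"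
    by (simp add: b'_def inv_f_f[OF bij_is_inj[OF bij]])
  also have "\<dots> = (\<Sum>i\<in>UNIV. b i) - (\<Sum>i\<in>UNIV. ev r i)"
    by (rule sum_subtractf_nat) (use r in \<open>auto simp: ev_def\<close>)
  also have "\<dots> = n" using Suc.hyps(2) by (simp add: ev_def)
  finally obtain z where z: "vecw op z = b'" using Suc.hyps(1) by metis
  have "vecw op (r # z) = b"
  proof
    fix i
    have "vecw op (r # z) i = ev r i + (b i - ev r i)"
      using z by (simp add: b'_def inv_f_f[OF bij_is_inj[OF bij]])
    also have "\<dots> = b i" using r by (auto simp: ev_def)
    finally show "vecw op (r # z) i = b i" .
  qed
  then show ?case by blast
qed

lemma ex_word_hd: assumes "b r \<ge> 1" shows "\<exists>z. vecw op (r # z) = b"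
proof -
  define b' where "b' = (\<lambda>x. b (inv (op r) x) - ev r (inv (op r) x))"
  obtain z where z: "vecw op z = b'" using ex_word by blast
  have "vecw op (r # z) = b"
  proof
    fix i
    have "vecw op (r # z) i = ev r i + (b i - ev r i)"
      using z by (simp add: b'_def inv_f_f[OF bij_is_inj[OF bij]])
    also have "\<dots> = b i" using assms by (auto simp: ev_def)
    finally show "vecw op (r # z) i = b i" .
  qed
  then show ?thesis by blast
qed

lemma vec_len: "vecw op w = vecw op w' \<Longrightarrow> length w = length w'"
  using sum_vec[of w] sum_vec[of w'] by simp

lemma welldef_aux: "\<forall>w w'. length w = n \<longrightarrow> vecw op w = vecw op w' \<longrightarrow> Pw op w = Pw op w'"
proof (induction n rule: less_induct)
  case (less n)
  show ?case
  proof (intro allI impI)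
    fix w w' assume len: "length w = n" and eq: "vecw op w = vecw op w'"
    have len': "length w' = n" using vec_len[OF eq] len by simp
    show "Pw op w = Pw op w'"
    proof (cases w)
      case Nil then show ?thesis using len len' by simp
    next
      case (Cons t u)
      then obtain t' u' where w': "w' = t' # u'" using len len' by (cases w') auto
      define a where "a = vecw op w"
      have au: "vecw op u (op t x) = a x - ev t x" for x using Cons a_def by simp
      have au': "vecw op u' (op t' x) = a x - ev t' x" for x using w' a_def eq by simp
      have lu: "length u < n" "length u' < n" using Cons w' len len' by auto
      show ?thesis
      proof (cases "t = t'")
        case True
        have "vecw op u = vecw op u'"
        proof
          fix y
          obtain x where "y = op t x" using bij[of t] by (metis bij_pointE)
          then show "vecw op u y = vecw op u' y" using au au' True by simp
        qed
        then have "Pw op u = Pw op u'" using less.IH lu by blast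
        then show ?thesis using Cons w' True by simp
      next
        case False
        have at': "a t' \<ge> 1" using w' eq a_def by (simp add: ev_def)
        have at: "a t \<ge> 1" using Cons a_def by (simp add: ev_def)
        define r where "r = op t t'"
        define r' where "r' = op t' t"
        have "vecw op u r \<ge> 1" using au[of t'] at' False by (simp add: r_def ev_def)
        then obtain z where z: "vecw op (r # z) = vecw op u" using ex_word_hd by blast
        have "vecw op u' r' \<ge> 1" using au'[of t] at False by (simp add: r'_def ev_def)
        then obtain z' where z': "vecw op (r' # z') = vecw op u'" using ex_word_hd by blast
        have P1: "Pw op u = Pw op (r # z)" using less.IH lu z by metis
        have P2: "Pw op u' = Pw op (r' # z')" using less.IH lu z' by metis
        have lz: "length z < n" using vec_len[OF z] lu by simp
        have cyc: "op r (op t x) = op r' (op t' x)" for x unfolding r_def r'_def by (rule ax)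
        have zz: "vecw op z = vecw op z'"
        proof
          fix y
          obtain x where x: "y = op r (op t x)"
            using bij[of r] bij[of t] by (metis bij_pointE)
          have e1: "vecw op z (op r (op t x)) = a x - ev t x - ev t' x"
          proof -
            have "ev r (op t x) + vecw op z (op r (op t x)) = a x - ev t x"
              using z au[of x] by (metis vecw.simps(2))
            moreover have "ev r (op t x) = ev t' x" by (simp add: ev_def r_def inj_op)
            ultimately show ?thesis by simp
          qed
          have e2: "vecw op z' (op r' (op t' x)) = a x - ev t' x - ev t x"
          proof -
            have "ev r' (op t' x) + vecw op z' (op r' (op t' x)) = a x - ev t' x"
              using z' au'[of x] by (metis vecw.simps(2))
            moreover have "ev r' (op t' x) = ev t x" by (simp add: ev_def r'_def inj_op)
            ultimately show ?thesis by simp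
          qed
          show "vecw op z y = vecw op z' y" using e1 e2 cyc x by simp
        qed
        have "Pw op z = Pw op z'" using less.IH lz zz by blast
        moreover have "op r \<circ> op t = op r' \<circ> op t'" using cyc by (simp add: fun_eq_iff)
        ultimately show ?thesis using Cons w' P1 P2 by (simp add: comp_assoc)
      qed
    qed
  qed
qed

lemma welldef: "vecw op w = vecw op w' \<Longrightarrow> Pw op w = Pw op w'"
  using welldef_aux by blast

definition Gm :: "('n \<Rightarrow> nat) \<Rightarrow> ('n \<Rightarrow> 'n)" where
  "Gm b = Pw op (SOME w. vecw op w = b)"

lemma Gm_vec: "Gm (vecw op w) = Pw op w"
  unfolding Gm_def by (rule welldef) (rule someI_ex, blast)

lemma vec_append: "vecw op (w @ w') = (\<lambda>i. vecw op w i + vecw op w' (Pw op w i))"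
  by (induction w) auto

lemma Pw_append: "Pw op (w @ w') = Pw op w' \<circ> Pw op w"
  by (induction w) auto

lemma cocycle: "Gm (\<lambda>i. a i + b (Gm a i)) = Gm b \<circ> Gm a"
proof -
  obtain w where w: "vecw op w = a" using ex_word by blast
  obtain w' where w': "vecw op w' = b" using ex_word by blast
  show ?thesis using Gm_vec[of "w @ w'"] Gm_vec[of w] Gm_vec[of w'] w w' by (simp add: vec_append Pw_append)
qed

lemma Gm_0: "Gm (\<lambda>_. 0) = id" using Gm_vec[of "[]"] by simp

lemma Gm_ev: "Gm (ev r) = op r" using Gm_vec[of "[r]"] by simp

lemma Pw_bij: "bij (Pw op w)"
proof (induction w)
  case Nil then show ?case by (simp only: Pw.simps bij_id)
next
  case (Cons t w) then show ?case by (simp only: Pw.simps) (rule bij_comp[OF bij Cons.IH])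
qed

lemma Gm_bij: "bij (Gm a)"
  using ex_word[of a] Gm_vec Pw_bij by metis

lemma Gm_inj: "Gm a x = Gm a y \<longleftrightarrow> x = y"
  using Gm_bij[of a] by (auto dest: bij_is_inj injD)

lemma Gm_psi: "Gm (\<lambda>i. j * ev s i) = psi_k op j s"
proof (induction j)
  case 0 then show ?case using Gm_0 by simp
next
  case (Suc j)
  have e: "(\<lambda>i. j * ev s i + ev ((diagT op ^^ j) s) (psi_k op j s i)) = (\<lambda>i. Suc j * ev s i)"
  proof
    fix i
    have bj: "bij (psi_k op j s)" by (rule psi_k_bij) (rule bij)
    have "ev ((diagT op ^^ j) s) (psi_k op j s i) = ev s i"
      using psi_k_self[of op j s] bj
      by (auto simp: ev_def) (metis bij_is_inj injD)
    then show "j * ev s i + ev ((diagT op ^^ j) s) (psi_k op j s i) = Suc j * ev s i" by simp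
  qed
  have "Gm (\<lambda>i. Suc j * ev s i) = Gm (ev ((diagT op ^^ j) s)) \<circ> Gm (\<lambda>i. j * ev s i)"
    using cocycle[of "\<lambda>i. j * ev s i" "ev ((diagT op ^^ j) s)"] Suc e by simp
  then show ?case using Suc Gm_ev by simp
qed

end

locale cls = cs +
  fixes d :: nat
  assumes cl: "is_class op d"
begin

lemma d_pos: "d \<ge> 1" using cl by (simp add: is_class_def)
lemma psi_d: "psi_k op d s = id" using cl by (simp add: is_class_def)
lemma d_min: "d' \<ge> 1 \<Longrightarrow> (\<forall>s. psi_k op d' s = id) \<Longrightarrow> d \<le> d'"
  using cl by (simp add: is_class_def)

lemma Gm_per: "Gm (\<lambda>i. a i + d * ev s i) = Gm a"
proof -
  have e: "(\<lambda>i. a i + d * ev (Gm a s) (Gm a i)) = (\<lambda>i. a i + d * ev s i)"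
    by (simp add: ev_def Gm_inj)
  have "Gm (\<lambda>i. a i + d * ev (Gm a s) (Gm a i)) = Gm (\<lambda>i. d * ev (Gm a s) i) \<circ> Gm a"
    by (rule cocycle)
  then show ?thesis using e Gm_psi psi_d by simp
qed

lemma Gm_mod_aux: "\<forall>a. (\<Sum>i\<in>UNIV. a i) = n \<longrightarrow> Gm a = Gm (\<lambda>i. a i mod d)"
proof (induction n rule: less_induct)
  case (less n)
  show ?case
  proof (intro allI impI)
    fix a :: "'a \<Rightarrow> nat" assume sa: "(\<Sum>i\<in>UNIV. a i) = n"
    show "Gm a = Gm (\<lambda>i. a i mod d)"
    proof (cases "\<forall>i. a i < d")
      case True then show ?thesis by simp
    next
      case False
      then obtain s where s: "a s \<ge> d" by (auto simp: not_less)
      define a' where "a' = (\<lambda>i. a i - d * ev s i)"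
      have aa: "a = (\<lambda>i. a' i + d * ev s i)" using s by (auto simp: a'_def ev_def fun_eq_iff)
      have "(\<Sum>i\<in>UNIV. a i) = (\<Sum>i\<in>UNIV. a' i) + (\<Sum>i\<in>UNIV. d * ev s i)"
        by (subst aa) (simp add: sum.distrib)
      moreover have "(\<Sum>i\<in>UNIV. d * ev s i) = d"
      proof -
        have "(\<Sum>i\<in>UNIV. d * ev s i) = (\<Sum>i\<in>UNIV. if i = s then d else 0)"
          by (rule sum.cong) (auto simp: ev_def)
        then show ?thesis by simp
      qed
      ultimately have "(\<Sum>i\<in>UNIV. a' i) < n" using sa d_pos by simp
      then have "Gm a' = Gm (\<lambda>i. a' i mod d)" using less.IH by blast
      moreover have "(\<lambda>i. a' i mod d) = (\<lambda>i. a i mod d)"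
        by (subst aa) (simp add: ev_def)
      moreover have "Gm a = Gm a'" by (subst aa) (rule Gm_per)
      ultimately show ?thesis by simp
    qed
  qed
qed

lemma Gm_mod: "Gm a = Gm (\<lambda>i. a i mod d)"
  using Gm_mod_aux by blast

lemma Gm_addd: "Gm (\<lambda>i. a i + d * c i) = Gm a"
  using Gm_mod[of a] Gm_mod[of "\<lambda>i. a i + d * c i"] by simp

lemma Gm_const: "Gm (\<lambda>i. d * c) = id"
  using Gm_addd[of "\<lambda>_. 0" "\<lambda>_. c"] Gm_0 by simp

lemma Gm_inv_aux:
  obtains c where "Gm c \<circ> Gm a = id" "\<And>i. a i + c (Gm a i) = d * Max (range a)"
proof -
  let ?M = "Max (range a)"
  have le: "a i \<le> d * ?M" for i
  proof -
    have "a i \<le> ?M" by (rule Max_ge) auto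
    also have "\<dots> \<le> d * ?M" using mult_le_mono1[OF d_pos, of ?M] by simp
    finally show ?thesis .
  qed
  define c where "c = (\<lambda>x. d * ?M - a (inv (Gm a) x))"
  have ce: "a i + c (Gm a i) = d * ?M" for i
    using le[of i] by (simp add: c_def inv_f_f[OF bij_is_inj[OF Gm_bij]])
  have "Gm c \<circ> Gm a = Gm (\<lambda>i. a i + c (Gm a i))" by (rule cocycle[symmetric])
  also have "\<dots> = id" by (simp only: ce Gm_const)
  finally show ?thesis using that ce by blast
qed

lemma Gm_inv: "\<exists>c. Gm c = inv (Gm a)"
proof -
  obtain c where "Gm c \<circ> Gm a = id" using Gm_inv_aux[of a] by blast
  then have "Gm c = inv (Gm a)" using Gm_bij[of a]
    by (metis bij_is_surj inv_o_cancel o_inv_o_cancel surj_iff bij_is_inj comp_id inv_inv_eq bij_imp_bij_inv)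
  then show ?thesis by blast
qed

lemma invariance:
  assumes "Gm b = id"
  shows "Gm (\<lambda>i. b (Gm a i)) = id"
proof -
  obtain c where c1: "Gm c \<circ> Gm a = id" and c2: "\<And>i. a i + c (Gm a i) = d * Max (range a)"
    using Gm_inv_aux[of a] by blast
  let ?M = "Max (range a)"
  have "Gm (\<lambda>i. b i + c (Gm b i)) = Gm c \<circ> Gm b" by (rule cocycle)
  then have bc: "Gm (\<lambda>i. b i + c i) = Gm c" using assms by simp
  have "Gm (\<lambda>i. a i + (\<lambda>i. b i + c i) (Gm a i)) = Gm (\<lambda>i. b i + c i) \<circ> Gm a" by (rule cocycle)
  also have "\<dots> = id" using bc c1 by simp
  moreover have "(\<lambda>i. a i + (b (Gm a i) + c (Gm a i))) = (\<lambda>i. b (Gm a i) + d * ?M)"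
  proof
    fix i show "a i + (b (Gm a i) + c (Gm a i)) = b (Gm a i) + d * ?M" using c2[of i] by simp
  qed
  ultimately have "Gm (\<lambda>i. b (Gm a i) + d * ?M) = id" by simp
  then show ?thesis using Gm_addd[of "\<lambda>i. b (Gm a i)" "\<lambda>_. ?M"] by simp
qed

lemma psi_k_inv:
  assumes "\<sigma> \<in> range Gm"
  shows "psi_k op j (\<sigma> s) = id \<longleftrightarrow> psi_k op j s = id"
proof -
  obtain a where a: "\<sigma> = Gm a" using assms by blast
  obtain c where c: "Gm c = inv \<sigma>" using Gm_inv a by blast
  have bs: "bij \<sigma>" using a Gm_bij by simp
  show ?thesis
  proof
    assume h: "psi_k op j (\<sigma> s) = id"
    have "Gm (\<lambda>i. (\<lambda>i. j * ev (\<sigma> s) i) (Gm a i)) = id"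
      by (rule invariance) (use h Gm_psi in simp)
    moreover have "(\<lambda>i. j * ev (\<sigma> s) (Gm a i)) = (\<lambda>i. j * ev s i)"
      using a by (simp add: ev_def Gm_inj)
    ultimately show "psi_k op j s = id" using Gm_psi by simp
  next
    assume h: "psi_k op j s = id"
    have "Gm (\<lambda>i. (\<lambda>i. j * ev s i) (Gm c i)) = id"
      by (rule invariance) (use h Gm_psi in simp)
    moreover have "(\<lambda>i. j * ev s (Gm c i)) = (\<lambda>i. j * ev (\<sigma> s) i)"
    proof -
      have "inv \<sigma> i = s \<longleftrightarrow> i = \<sigma> s" for i using bs by (metis bij_inv_eq_iff)
      then show ?thesis using c by (simp add: ev_def)
    qed
    ultimately show "psi_k op j (\<sigma> s) = id" using Gm_psi by simp
  qed
qed

end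

lemma mod_cancel_nat:
  assumes h: "((A::nat) + x) mod d = (A + y) mod d" shows "x mod d = y mod d"
proof -
  have "int ((A + x) mod d) = int ((A + y) mod d)" using h by simp
  then have "(int A + int x) mod int d = (int A + int y) mod int d" by (simp only: zmod_int of_nat_add)
  then have "(int A + int x - int A) mod int d = (int A + int y - int A) mod int d"
    by (rule mod_diff_cong) simp
  then have "int x mod int d = int y mod int d" by simp
  then have "int (x mod d) = int (y mod d)" by (simp only: zmod_int)
  then show ?thesis by simp
qed

lemma psi_pos: "psi_w op (map (\<lambda>t. (t, True)) w) = Pw op w"
  by (induction w) auto

lemma funpow_comp_id_cancel:
  assumes "bij \<sigma>" "f \<circ> \<sigma> = \<sigma>" shows "f = id"
proof
  fix x
  obtain y where "x = \<sigma> y" using assms(1) by (metis bij_pointE)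
  then show "f x = id x" using assms(2) by (metis comp_apply id_apply)
qed

context cls
begin

lemma comp_in: "\<sigma> \<in> range Gm \<Longrightarrow> \<tau> \<in> range Gm \<Longrightarrow> \<tau> \<circ> \<sigma> \<in> range Gm"
proof -
  assume "\<sigma> \<in> range Gm" "\<tau> \<in> range Gm"
  then obtain a b where ab: "\<sigma> = Gm a" "\<tau> = Gm b" by blast
  have "\<tau> \<circ> \<sigma> = Gm (\<lambda>i. a i + b (Gm a i))" using ab cocycle by simp
  then show ?thesis by blast
qed

lemma range_eq: "range Gm = perm_group op"
proof
  show "range Gm \<subseteq> perm_group op"
  proof
    fix \<sigma> assume "\<sigma> \<in> range Gm"
    then obtain a where a: "\<sigma> = Gm a" by blast
    obtain w where "vecw op w = a" using ex_word by blast
    then have "\<sigma> = psi_w op (map (\<lambda>t. (t, True)) w)" using a Gm_vec psi_pos by metis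
    then show "\<sigma> \<in> perm_group op" by (simp add: perm_group_def)
  qed
next
  have "psi_w op w \<in> range Gm" for w
  proof (induction w)
    case Nil then show ?case using Gm_0 by (metis psi_w.simps(1) rangeI)
  next
    case (Cons x w)
    obtain s b where x: "x = (s, b)" by force
    have o: "op s \<in> range Gm" using Gm_ev by (metis rangeI)
    have io: "inv (op s) \<in> range Gm" using Gm_inv Gm_ev by (metis rangeI)
    show ?case
    proof (cases b)
      case True
      have eq: "psi_w op (x # w) = psi_w op w \<circ> op s" using x True by simp
      show ?thesis by (subst eq) (rule comp_in[OF o Cons])
    next
      case False
      have eq: "psi_w op (x # w) = psi_w op w \<circ> inv (op s)" using x False by simp
      show ?thesis by (subst eq) (rule comp_in[OF io Cons])
    qed
  qed
  then show "perm_group op \<subseteq> range Gm" by (auto simp: perm_group_def)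
qed

definition V :: "('a \<Rightarrow> nat) set" where "V = {v. \<forall>i. v i < d}"

lemma V_eq: "V = PiE UNIV (\<lambda>_. {..<d})" by (auto simp: V_def PiE_UNIV_domain Pi_def)

lemma card_V: "card V = d ^ CARD('a)"
  by (simp add: V_eq card_PiE)

lemma finite_V: "finite V" by (simp add: V_eq finite_PiE)

lemma range_V: "range Gm = Gm ` V"
proof
  show "range Gm \<subseteq> Gm ` V"
  proof
    fix \<sigma> assume "\<sigma> \<in> range Gm"
    then obtain a where a: "\<sigma> = Gm a" by blast
    have "(\<lambda>i. a i mod d) \<in> V" using d_pos by (simp add: V_def)
    then show "\<sigma> \<in> Gm ` V" using a Gm_mod by blast
  qed
qed auto

definition K :: "('a \<Rightarrow> nat) set" where "K = {v\<in>V. Gm v = id}"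

lemma fiber_card:
  assumes a: "a \<in> V"
  shows "card {v\<in>V. Gm v = Gm a} = card K"
proof -
  let ?\<sigma> = "Gm a"
  define h where "h b = (\<lambda>i. (a i + b (?\<sigma> i)) mod d)" for b :: "'a \<Rightarrow> nat"
  have hV: "h ` V \<subseteq> V" using d_pos by (auto simp: h_def V_def)
  have inj: "inj_on h V"
  proof (rule inj_onI)
    fix b b' assume b: "b \<in> V" "b' \<in> V" and e: "h b = h b'"
    show "b = b'"
    proof
      fix y
      obtain x where x: "y = ?\<sigma> x" using Gm_bij[of a] by (metis bij_pointE)
      have "(a x + b y) mod d = (a x + b' y) mod d" using e x by (simp add: h_def fun_eq_iff)
      then have "b y mod d = b' y mod d" by (rule mod_cancel_nat)
      then show "b y = b' y" using b by (simp add: V_def)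
    qed
  qed
  have Gh: "Gm (h b) = Gm b \<circ> ?\<sigma>" for b
  proof -
    have "Gm (h b) = Gm (\<lambda>i. a i + b (?\<sigma> i))" unfolding h_def by (rule Gm_mod[symmetric])
    then show ?thesis using cocycle by simp
  qed
  have "{v\<in>V. Gm v = ?\<sigma>} = h ` K"
  proof
    show "h ` K \<subseteq> {v\<in>V. Gm v = ?\<sigma>}" using hV Gh by (auto simp: K_def)
  next
    show "{v\<in>V. Gm v = ?\<sigma>} \<subseteq> h ` K"
    proof
      fix v assume v: "v \<in> {v\<in>V. Gm v = ?\<sigma>}"
      have "h ` V = V" by (rule endo_inj_surj[OF finite_V hV inj])
      then obtain b where b: "b \<in> V" "v = h b" using v by blast
      then have "Gm b \<circ> ?\<sigma> = ?\<sigma>" using v Gh by simp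
      then have "Gm b = id" using funpow_comp_id_cancel Gm_bij by blast
      then show "v \<in> h ` K" using b by (auto simp: K_def)
    qed
  qed
  moreover have "inj_on h K" using inj by (rule inj_on_subset) (auto simp: K_def)
  ultimately show ?thesis by (simp add: card_image)
qed

lemma card_prod: "card V = card (range Gm) * card K"
proof -
  have "card V = (\<Sum>v\<in>V. 1)" by simp
  also have "\<dots> = (\<Sum>\<sigma>\<in>Gm ` V. \<Sum>v\<in>{v. v \<in> V \<and> Gm v = \<sigma>}. 1)"
    by (rule sum.image_gen[OF finite_V])
  also have "\<dots> = (\<Sum>\<sigma>\<in>Gm ` V. card K)"
  proof (rule sum.cong)
    fix \<sigma> assume "\<sigma> \<in> Gm ` V"
    then obtain a where "a \<in> V" "\<sigma> = Gm a" by blast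
    then show "(\<Sum>v\<in>{v. v \<in> V \<and> Gm v = \<sigma>}. 1) = card K" using fiber_card by simp
  qed simp
  finally show ?thesis using range_V by simp
qed

lemma card_dvd: "card (perm_group op) dvd d ^ CARD('a)"
  using card_prod card_V range_eq by (metis dvd_triv_left)

end

context cls
begin

definition tau :: "'a \<Rightarrow> ('a \<Rightarrow> 'a) \<Rightarrow> ('a \<Rightarrow> 'a)" where
  "tau s \<sigma> = op (\<sigma> s) \<circ> \<sigma>"

lemma tau_iter: "(tau s ^^ j) \<sigma> = psi_k op j (\<sigma> s) \<circ> \<sigma>"
proof (induction j)
  case (Suc j)
  have "(tau s ^^ Suc j) \<sigma> = tau s ((tau s ^^ j) \<sigma>)" by simp
  also have "\<dots> = op (((tau s ^^ j) \<sigma>) s) \<circ> (tau s ^^ j) \<sigma>" by (rule tau_def)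
  also have "\<dots> = op (psi_k op j (\<sigma> s) (\<sigma> s)) \<circ> (psi_k op j (\<sigma> s) \<circ> \<sigma>)"
    using Suc.IH by (simp add: comp_def)
  also have "\<dots> = psi_k op (Suc j) (\<sigma> s) \<circ> \<sigma>" by (simp add: psi_k_self comp_assoc)
  finally show ?case .
qed simp

lemma tau_range: "\<sigma> \<in> range Gm \<Longrightarrow> tau s \<sigma> \<in> range Gm"
proof -
  assume h: "\<sigma> \<in> range Gm"
  have "op (\<sigma> s) \<in> range Gm" using Gm_ev by (metis rangeI)
  then show ?thesis unfolding tau_def using comp_in h by blast
qed

lemma least_ex:
  fixes s
  defines "k \<equiv> LEAST k. 0 < k \<and> psi_k op k s = id"
  shows "0 < k \<and> psi_k op k s = id"
  unfolding k_def by (rule LeastI[of _ d]) (use d_pos psi_d in auto)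

lemma k_dvd_card:
  fixes s
  defines "k \<equiv> LEAST k. 0 < k \<and> psi_k op k s = id"
  shows "k dvd card (range Gm)"
proof (rule orbit_dvd[where f = "tau s"])
  have kk: "0 < k" "psi_k op k s = id" using least_ex[of s] k_def by auto
  show "finite (range Gm)" by (rule finite_subset[of _ UNIV]) auto
  show "\<forall>x\<in>range Gm. tau s x \<in> range Gm" using tau_range by blast
  have eqv: "(tau s ^^ j) \<sigma> = \<sigma> \<longleftrightarrow> psi_k op j s = id" if "\<sigma> \<in> range Gm" for j \<sigma>
  proof -
    have b: "bij \<sigma>" using that Gm_bij by auto
    have "(tau s ^^ j) \<sigma> = \<sigma> \<longleftrightarrow> psi_k op j (\<sigma> s) = id"
      using funpow_comp_id_cancel[OF b] by (auto simp: tau_iter)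
    also have "\<dots> \<longleftrightarrow> psi_k op j s = id" by (rule psi_k_inv[OF that])
    finally show ?thesis .
  qed
  show "\<forall>x\<in>range Gm. (tau s ^^ k) x = x" using eqv kk by blast
  show "\<forall>x\<in>range Gm. \<forall>j. 0 < j \<and> j < k \<longrightarrow> (tau s ^^ j) x \<noteq> x"
  proof (intro ballI allI impI)
    fix x j assume x: "x \<in> range Gm" and j: "0 < j \<and> j < k"
    show "(tau s ^^ j) x \<noteq> x"
    proof
      assume "(tau s ^^ j) x = x"
      then have "psi_k op j s = id" using eqv x by blast
      then have "k \<le> j" unfolding k_def using j by (simp add: Least_le)
      then show False using j by simp
    qed
  qed
  show "0 < k" by fact
qed

lemma d_dvd_card: "d dvd card (perm_group op)"
proof -
  let ?m = "card (range Gm)"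
  let ?g = "gcd ?m d"
  have "psi_k op ?g s = id" for s
  proof -
    define k where "k = (LEAST k. 0 < k \<and> psi_k op k s = id)"
    have kk: "0 < k" "psi_k op k s = id" using least_ex[of s] k_def by auto
    have "k dvd ?m" using k_dvd_card k_def by simp
    moreover have "k dvd d" by (rule psi_k_least_dvd[OF psi_d k_def kk])
    ultimately have "k dvd ?g" by simp
    then show ?thesis using psi_k_dvd_id[OF kk(2)] by blast
  qed
  moreover have "?g \<ge> 1" using d_pos by (simp add: Suc_le_eq)
  ultimately have "d \<le> ?g" using d_min by blast
  moreover have "?g \<le> d" using d_pos by (simp add: dvd_imp_le)
  ultimately have "?g = d" by simp
  then show ?thesis using range_eq by (metis gcd_dvd1)
qed

lemma T_order: "perm_order (diagT op) dvd d"
proof -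
  have Td: "diagT op ^^ d = id"
  proof
    fix s show "(diagT op ^^ d) s = id s" using psi_k_self[of op d s] psi_d by simp
  qed
  define or where "or = perm_order (diagT op)"
  have oo: "0 < or \<and> diagT op ^^ or = id"
    unfolding or_def perm_order_def by (rule LeastI[of _ d]) (use d_pos Td in auto)
  have pow: "diagT op ^^ (or * q) = id" for q
  proof -
    have "diagT op ^^ (or * q) = (diagT op ^^ or) ^^ q" by (rule funpow_mult[symmetric])
    then show ?thesis using oo by simp
  qed
  have "diagT op ^^ d = diagT op ^^ (d mod or + or * (d div or))" by simp
  also have "\<dots> = diagT op ^^ (d mod or)" by (simp only: funpow_add pow comp_id)
  finally have "diagT op ^^ (d mod or) = id" using Td by simp
  show ?thesis
  proof (rule ccontr)
    assume "\<not> perm_order (diagT op) dvd d"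
    then have m0: "0 < d mod or" using or_def by (simp add: dvd_eq_mod_eq_0)
    have w: "0 < d mod or \<and> diagT op ^^ (d mod or) = id"
      using m0 \<open>diagT op ^^ (d mod or) = id\<close> by simp
    have "perm_order (diagT op) \<le> d mod or" unfolding perm_order_def by (rule Least_le) (rule w)
    then have "or \<le> d mod or" using or_def by simp
    moreover have "d mod or < or" using oo by simp
    ultimately show False by simp
  qed
qed

end

theorem mainTheorem5:
  fixes op :: "'n::finite \<Rightarrow> 'n \<Rightarrow> 'n" and d :: nat
  assumes "cycle_set op" and "is_class op d"
  shows "(\<exists>\<phi> :: complex^'n^'n \<Rightarrow> ('n \<Rightarrow> 'n).
            \<phi> ` germ op d \<subseteq> perm_group op \<and> (\<forall>w. psi_w op w = \<phi> (pi_w op d w)))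
       \<and> perm_order (diagT op) dvd d
       \<and> d dvd card (perm_group op)
       \<and> card (perm_group op) dvd d ^ CARD('n)"
proof -
  have c1: "\<And>s. bij (op s)" using assms(1) unfolding cycle_set_def by blast
  have c2: "\<And>s t u. op (op s t) (op s u) = op (op t s) (op t u)"
    using assms(1) unfolding cycle_set_def by blast
  interpret cls op d
    by (intro cls.intro cs.intro cls_axioms.intro c1 assms(2)) (rule c2)
  show ?thesis
    by (intro conjI part1[OF c1, where d=d] T_order d_dvd_card card_dvd)
qed

end
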